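(* Consider in $1+1$-dimensional Minkowski spacetime the system \begin{align*} &u^\mu \nabla_\mu \varrho + (\varrho+q) \nabla_\mu u^\mu = 0,\\ &(\varrho+q) u^\mu \nabla_\mu u^\nu + (g^{\nu\mu}+u^\nu u^\mu)\nabla_\mu q = 0,\\ &u^\mu \nabla_\mu q + c^2 (\varrho+q) \nabla_\mu u^\mu + f = 0, \end{align*} where $q=\Pi+p$, $f=\tau_0^{-1}(\Pi+\lambda\Pi^2)$, $c^2 = \partial_\varrho p + \frac{\zeta}{\tau_0(\varrho+q)}$, $-(u^0)^2+(u^1)^2=-1$, and $p,\zeta,\tau_0$ depend only on $\varrho$. A necessary condition for the existence of Riemann invariants for this system is that $p(\varrho)$ is constant.
   Context: This is the Müller-Israel-Stewart system with bulk viscosity written with unknowns $\Psi=(\varrho,u^1,q)^T$ in the form $\mathcal{A}^0\partial_0\Psi+\mathcal{A}^1\partial_1\Psi+\mathcal{B}=0$ (after dividing the momentum equation by $(u^0)^2$), where $\mathcal{A}^0 = \begin{pmatrix} u^0 & \frac{(\varrho+q)u^1}{u^0} & 0 \\ 0 & \frac{\varrho+q}{u^0} & \frac{u^1}{u^0} \\ 0 & \frac{c^2(\varrho+q)u^1}{u^0} & u^0 \end{pmatrix}$, $\mathcal{A}^1 = \begin{pmatrix} u^1 & \varrho+q & 0 \\ 0 & \frac{(\varrho+q)u^1}{(u^0)^2} & 1\\ 0 & c^2 (\varrho+q) & u^1 \end{pmatrix}$, $\mathcal{B}=(0,0,f)^T$. The left eigenvectors of $(\mathcal{A}^0)^{-1}\mathcal{A}^1$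 are $l^1=(-c^2,0,1)^T$, $l^2=(0,(\varrho+q)c/u^0,1)^T$, $l^3=(0,-(\varrho+q)c/u^0,1)^T$. Existence of Riemann invariants means these left eigenvectors are linearly independent and there exist functions $\Lambda^A(\Psi)$, $\alpha^A(\Psi)$ with $\Lambda^A l^A = \nabla_\Psi \alpha^A$ for $A=1,2,3$. *)

theory Defs
  imports "HOL-Analysis.Analysis"
begin

text \<open>State vector Psi = (rho, u^1, q) as an element of real^3:
  Psi$1 = rho, Psi$2 = u^1, Psi$3 = q.\<close>

definition u0 :: "real \<Rightarrow> real" where
  "u0 u = sqrt (1 + u\<^sup>2)"

definition csq :: "(real \<Rightarrow> real) \<Rightarrow> (real \<Rightarrow> real) \<Rightarrow> (real \<Rightarrow> real) \<Rightarrow> real \<Rightarrow> real \<Rightarrow> real" where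
  "csq p zeta tau0 rho q = deriv p rho + zeta rho / (tau0 rho * (rho + q))"

definition sound :: "(real \<Rightarrow> real) \<Rightarrow> (real \<Rightarrow> real) \<Rightarrow> (real \<Rightarrow> real) \<Rightarrow> real \<Rightarrow> real \<Rightarrow> real" where
  "sound p zeta tau0 rho q = sqrt (csq p zeta tau0 rho q)"

text \<open>Left eigenvectors l^1, l^2, l^3 of (A^0)^{-1} A^1.\<close>
definition lvec :: "(real \<Rightarrow> real) \<Rightarrow> (real \<Rightarrow> real) \<Rightarrow> (real \<Rightarrow> real) \<Rightarrow> nat \<Rightarrow> real^3 \<Rightarrow> real^3" where
  "lvec p zeta tau0 A Psi =
     (let rho = Psi$1; u = Psi$2; q = Psi$3; c = sound p zeta tau0 rho q in
      if A = 1 then vector [- csq p zeta tau0 rho q, 0, 1]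
      else if A = 2 then vector [0, (rho + q) * c / u0 u, 1]
      else vector [0, - ((rho + q) * c / u0 u), 1])"

definition has_Riemann_invariants ::
  "(real \<Rightarrow> real) \<Rightarrow> (real \<Rightarrow> real) \<Rightarrow> (real \<Rightarrow> real) \<Rightarrow> (real^3) set \<Rightarrow> bool" where
  "has_Riemann_invariants p zeta tau0 D \<longleftrightarrow>
     (\<forall>Psi\<in>D. \<forall>a b c. a *\<^sub>R lvec p zeta tau0 1 Psi + b *\<^sub>R lvec p zeta tau0 2 Psi
                         + c *\<^sub>R lvec p zeta tau0 3 Psi = 0 \<longrightarrow> a = 0 \<and> b = 0 \<and> c = 0) \<and>
     (\<forall>A\<in>{1,2,3::nat}. \<exists>(Lambda :: real^3 \<Rightarrow> real) (alpha :: real^3 \<Rightarrow> real).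
        \<forall>Psi\<in>D. Lambda Psi \<noteq> 0 \<and>
          (alpha has_derivative (\<lambda>h. (Lambda Psi *\<^sub>R lvec p zeta tau0 A Psi) \<bullet> h)) (at Psi))"

definition state_domain :: "(real^3) set" where
  "state_domain = {Psi. Psi$1 > 0 \<and> Psi$1 + Psi$3 > 0}"

end

theory Submission
  imports Defs
begin

lemma vec3_inner: "(vector [a,b,c] :: real^3) \<bullet> vector [d,e,f] = a*d + b*e + c*f"
  by (simp add: inner_vec_def sum_3)

lemma vec3_line: "(vector [a,b,c] :: real^3) + t *\<^sub>R vector [d,e,f] = vector [a+t*d, b+t*e, c+t*f]"
  by (simp add: vec_eq_iff forall_3)

lemma line_deriv:
  fixes alpha :: "real^3 \<Rightarrow> real"
  assumes "(alpha has_derivative (\<lambda>h. (L *\<^sub>R l) \<bullet> h)) (at y)" "y = x + t *\<^sub>R v"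
  shows "((\<lambda>s. alpha (x + s *\<^sub>R v)) has_field_derivative (L * (l \<bullet> v))) (at t)"
proof -
  have d1: "((\<lambda>s. x + s *\<^sub>R v) has_derivative (\<lambda>h. h *\<^sub>R v)) (at t)"
    by (auto intro!: derivative_eq_intros)
  have "((\<lambda>s. alpha (x + s *\<^sub>R v)) has_derivative (\<lambda>h. (L *\<^sub>R l) \<bullet> (h *\<^sub>R v))) (at t)"
    by (rule has_derivative_compose[OF d1]) (use assms in simp)
  moreover have "(\<lambda>h. (L *\<^sub>R l) \<bullet> (h *\<^sub>R v)) = (*) (L * (l \<bullet> v))"
    by (auto simp: fun_eq_iff)
  ultimately show ?thesis unfolding has_field_derivative_def by simp
qed

lemma dom_vec: "vector [r, u, q] \<in> state_domain \<longleftrightarrow> r > 0 \<and> r + q > 0"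
  by (simp add: state_domain_def)

lemma lvec2: "lvec p zeta tau0 2 (vector [r, u, q]) = vector [0, (r + q) * sound p zeta tau0 r q / u0 u, 1]"
  by (simp add: lvec_def Let_def)

lemma lin6:
  fixes x y a b c d :: real
  assumes "x + y = 4*a + 2*b" "4*x + 2*y = 9*a + 3*b" "9*x + 3*y = 16*a + 4*b"
    "x + y = 9*c + 3*d" "4*x + 2*y = 16*c + 4*d" "9*x + 3*y = 25*c + 5*d"
  shows "x = 0"
proof -
  have "x = a" using assms(1-3) by linarith
  then have "y = x" using assms(1-2) by linarith
  have "x = c" using assms(4-6) by linarith
  then have "y = 2 * x" using assms(4-5) by linarith
  show ?thesis using \<open>y = x\<close> \<open>y = 2 * x\<close> by linarith
qed

theorem mainTheorem12:
  fixes p zeta tau0 :: "real \<Rightarrow> real"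
  assumes "\<forall>rho>0. p differentiable (at rho)"
    and "\<forall>rho>0. tau0 rho > 0"
    and "\<forall>Psi\<in>state_domain. csq p zeta tau0 (Psi$1) (Psi$3) > 0"
    and "has_Riemann_invariants p zeta tau0 state_domain"
  shows "\<exists>C. \<forall>rho>0. p rho = C"
proof -
  obtain L :: "real^3 \<Rightarrow> real" and alpha :: "real^3 \<Rightarrow> real" where
    H: "\<And>Psi. Psi \<in> state_domain \<Longrightarrow> L Psi \<noteq> 0 \<and>
          (alpha has_derivative (\<lambda>h. (L Psi *\<^sub>R lvec p zeta tau0 2 Psi) \<bullet> h)) (at Psi)"
    using assms(4) unfolding has_Riemann_invariants_def by (metis insertI1 insertI2)
  have Hv: "(alpha has_derivative (\<lambda>h. (L (vector [r,u,q]) *\<^sub>R vector [0, (r + q) * sound p zeta tau0 r q / u0 u, 1]) \<bullet> h)) (at (vector [r,u,q]))"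
    "L (vector [r,u,q]) \<noteq> 0"
    if "r > 0" "r + q > 0" for r u q
    using H[of "vector [r,u,q]"] that by (simp_all add: dom_vec lvec2)
  have F: "alpha (vector [r1,u,q]) = alpha (vector [r2,u,q])"
    if "r1 > 0" "r2 > 0" "r1 + q > 0" "r2 + q > 0" for r1 r2 u q
  proof -
    define S where "S = {max 0 (-q)<..}"
    have cS: "convex S" unfolding S_def by simp
    have "((\<lambda>s. alpha (vector [0,u,q] + s *\<^sub>R vector [1,0,0])) has_field_derivative 0) (at t within S)"
      if "t \<in> S" for t
    proof -
      have t: "t > 0" "t + q > 0" using that by (auto simp: S_def)
      have "((\<lambda>s. alpha (vector [0,u,q] + s *\<^sub>R vector [1,0,0])) has_field_derivative
              (L (vector [t,u,q]) * ((vector [0, (t + q) * sound p zeta tau0 t q / u0 u, 1] :: real^3) \<bullet> vector [1,0,0]))) (at t)"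
        using line_deriv[OF Hv(1)[of t q u, OF t], of "vector [0,u,q]" t "vector [1,0,0]"] by (simp add: vec3_line)
      then show ?thesis by (simp add: vec3_inner has_field_derivative_at_within)
    qed
    then obtain c where "\<forall>x\<in>S. alpha (vector [0,u,q] + x *\<^sub>R vector [1,0,0]) = c"
      using has_field_derivative_zero_constant[OF cS] by blast
    moreover have "r1 \<in> S" "r2 \<in> S" using that by (auto simp: S_def)
    ultimately show ?thesis by (simp add: vec3_line)
  qed
  define K where "K r q = (r + q) * sound p zeta tau0 r q" for r q
  have u00: "u0 0 = 1" by (simp add: u0_def)
  have KK: "K r1 q = K r2 q" if "r1 > 0" "r2 > 0" "r1 + q > 0" "r2 + q > 0" for r1 r2 q
  proof -
    define m where "m = max (-(r1+q)) (-(r2+q))"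
    have D3: "((\<lambda>s. alpha (vector [ri,0,q] + s *\<^sub>R vector [0,0,1])) has_field_derivative L (vector [ri,0,q])) (at 0)"
      if "ri > 0" "ri + q > 0" for ri
      using line_deriv[OF Hv(1)[OF that, of 0], of "vector [ri,0,q]" 0 "vector [0,0,1]"]
      by (simp add: vec3_inner)
    have D2: "((\<lambda>s. alpha (vector [ri,0,q] + s *\<^sub>R vector [0,1,0])) has_field_derivative L (vector [ri,0,q]) * K ri q) (at 0)"
      if "ri > 0" "ri + q > 0" for ri
      using line_deriv[OF Hv(1)[OF that, of 0], of "vector [ri,0,q]" 0 "vector [0,1,0]"]
      by (simp add: vec3_inner u00 K_def)
    have "((\<lambda>s. alpha (vector [r2,0,q] + s *\<^sub>R vector [0,0,1])) has_field_derivative L (vector [r1,0,q])) (at 0)"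
    proof (rule has_field_derivative_transform_within_open[OF D3[OF that(1,3)], of "{m<..}"])
      show "open {m<..}" by simp
      show "0 \<in> {m<..}" using that by (simp add: m_def)
      fix x assume "x \<in> {m<..}"
      then show "alpha (vector [r1, 0, q] + x *\<^sub>R vector [0, 0, 1]) = alpha (vector [r2, 0, q] + x *\<^sub>R vector [0, 0, 1])"
        using that F[of r1 r2 "q+x" 0] by (simp add: vec3_line m_def)
    qed
    then have eqL: "L (vector [r1,0,q]) = L (vector [r2,0,q])"
      using D3[OF that(2,4)] DERIV_unique by blast
    have "((\<lambda>s. alpha (vector [r2,0,q] + s *\<^sub>R vector [0,1,0])) has_field_derivative L (vector [r1,0,q]) * K r1 q) (at 0)"
    proof (rule has_field_derivative_transform_within_open[OF D2[OF that(1,3)], of UNIV])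
      fix x
      show "alpha (vector [r1, 0, q] + x *\<^sub>R vector [0, 1, 0]) = alpha (vector [r2, 0, q] + x *\<^sub>R vector [0, 1, 0])"
        using that F[of r1 r2 q x] by (simp add: vec3_line)
    qed auto
    then have "L (vector [r1,0,q]) * K r1 q = L (vector [r2,0,q]) * K r2 q"
      using D2[OF that(2,4)] DERIV_unique by blast
    then show ?thesis using eqL Hv(2)[OF that(1,3), of 0] by simp
  qed
  define G where "G r s = s^2 * deriv p r + s * (zeta r / tau0 r)" for r s
  have KG: "(K r q)^2 = G r (r + q)" if "r > 0" "r + q > 0" for r q
  proof -
    have c: "csq p zeta tau0 r q > 0" using assms(3) that dom_vec[of r 0 q] by fastforce
    have t: "tau0 r > 0" using assms(2) that by auto
    have "(K r q)^2 = (r+q)^2 * csq p zeta tau0 r q"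
      using c by (simp add: K_def sound_def power_mult_distrib)
    also have "\<dots> = G r (r + q)"
    proof -
      have nz: "tau0 r * (r + q) \<noteq> 0" "tau0 r \<noteq> 0" "r + q \<noteq> 0" using t that by auto
      have "(r+q)^2 * (zeta r / (tau0 r * (r + q))) = (r + q) * (zeta r / tau0 r)"
        using nz by (simp add: power2_eq_square divide_simps)
      then show ?thesis by (simp add: csq_def G_def distrib_left)
    qed
    finally show ?thesis .
  qed
  have GG: "G r s = G (r + d) (s + d)" if "r > 0" "s > 0" "d > 0" for r s d
  proof -
    have "G r s = (K r (s - r))^2" using KG[of r "s - r"] that by simp
    also have "\<dots> = (K (r + d) (s - r))^2" using KK[of r "r + d" "s - r"] that by simp
    also have "\<dots> = G (r + d) (s + d)" using KG[of "r + d" "s - r"] that by (simp add: add.commute)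
    finally show ?thesis .
  qed
  have d0: "deriv p r = 0" if "r > 0" for r
  proof -
    have g: "G r s = G (r + d) (s + d)" if "s > 0" "d > 0" for s d
      using GG[of r s d] that \<open>r > 0\<close> by blast
    have e1: "deriv p r + zeta r / tau0 r = 4 * deriv p (r+1) + 2 * (zeta (r+1) / tau0 (r+1))"
      using g[of 1 1] unfolding G_def by (simp add: power2_eq_square)
    have e2: "4 * deriv p r + 2 * (zeta r / tau0 r) = 9 * deriv p (r+1) + 3 * (zeta (r+1) / tau0 (r+1))"
      using g[of 2 1] unfolding G_def by (simp add: power2_eq_square)
    have e3: "9 * deriv p r + 3 * (zeta r / tau0 r) = 16 * deriv p (r+1) + 4 * (zeta (r+1) / tau0 (r+1))"
      using g[of 3 1] unfolding G_def by (simp add: power2_eq_square)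
    have e4: "deriv p r + zeta r / tau0 r = 9 * deriv p (r+2) + 3 * (zeta (r+2) / tau0 (r+2))"
      using g[of 1 2] unfolding G_def by (simp add: power2_eq_square)
    have e5: "4 * deriv p r + 2 * (zeta r / tau0 r) = 16 * deriv p (r+2) + 4 * (zeta (r+2) / tau0 (r+2))"
      using g[of 2 2] unfolding G_def by (simp add: power2_eq_square)
    have e6: "9 * deriv p r + 3 * (zeta r / tau0 r) = 25 * deriv p (r+2) + 5 * (zeta (r+2) / tau0 (r+2))"
      using g[of 3 2] unfolding G_def by (simp add: power2_eq_square)
    from e1 e2 e3 e4 e5 e6 show ?thesis by (rule lin6)
  qed
  have "\<exists>c. \<forall>x\<in>{0<..}. p x = c"
  proof (rule has_field_derivative_zero_constant)
    fix x :: real assume "x \<in> {0<..}"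
    then have "x > 0" by simp
    then have "(p has_field_derivative deriv p x) (at x)"
      using assms(1) \<open>x > 0\<close> unfolding DERIV_deriv_iff_has_field_derivative real_differentiable_def by blast
    then show "(p has_field_derivative 0) (at x within {0<..})"
      using d0[OF \<open>x > 0\<close>] by (simp add: has_field_derivative_at_within)
  qed simp
  then obtain c where c: "\<forall>x\<in>{0<..}. p x = c" by blast
  show ?thesis
  proof (intro exI allI impI)
    fix rho :: real assume "rho > 0"
    then show "p rho = c" using c by simp
  qed
qed

end
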